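(* For each $n\in\omega$ let $\tau_n$ be the order topology on $A_n$ induced by $\leq_n$. Then in $\mathcal{N}_{\mathbb{R}}$ each space $\langle A_n,\tau_n\rangle$ is metrizable and the family $\{\langle A_n,\tau_n\rangle:n\in\omega\}$ is denumerable, but the direct sum $\bigoplus_{n\in\omega}\langle A_n,\tau_n\rangle$ is not metrizable in $\mathcal{N}_{\mathbb{R}}$. In consequence, for the metrics $d_n(a_{n,x},a_{n,y})=|x-y|$ on $A_n$, the family $\{d_n:n\in\omega\}$ does not belong to $\mathcal{N}_{\mathbb{R}}$, and $\mathbf{CSM}_{le}$ is false in $\mathcal{N}_{\mathbb{R}}$.
   Context: Permutation model $\mathcal{N}_{\mathbb{R}}$: Let $\mathcal{M}$ be a model of $\mathbf{ZFA}+\mathbf{AC}$ whose set of atoms is $A=\bigcup_{n\in\omega}A_n$, a pairwise disjoint union, where $A_n=\{a_{n,x}:x\in\mathbb{R}\}$ and $x\mapsto a_{n,x}$ is a bijection (in $\mathcal{M}$). Let $\leq_n$ be the linear order on $A_n$ given by $a_{n,x}\leq_n a_{n,y}\iff x\le y$. Let $\mathcal{G}$ be the group of all permutations $\pi$ of $A$ such that for every $n$, $\pi\upharpoonright A_n$ is an order-automorphism of $\langle A_n,\leq_n\rangle$. Let $\mathcal{I}$ be the ideal of all $E\subseteq A$ with $E\subseteq\bigcup_{n\in S}A_n$ for some finite $S\subseteq\omega$. Then $\mathcal{N}_{\mathbb{R}}$ is the class of all $x\in\mathcal{M}$ such that every $t\in\mathrm{TC}(\{x\})$ has a support $E\in\mathcal{I}$,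 i.e. every $\phi\in\mathcal{G}$ fixing $E$ pointwise satisfies $\phi(t)=t$ (permutations acting on $\mathcal{M}$ via their $\in$-automorphism extensions). $\mathbf{CSM}_{le}$: every countable direct sum of metrizable spaces is metrizable. *)

theory Defs
  imports Complex_Main
begin

text \<open>Atoms a_{n,x} are represented by pairs (n, x) :: nat \<times> real.
  Membership of the relevant objects (sets of atoms, sets of sets of atoms,
  graphs of real-valued metrics, indexed families of these) in the permutation
  model N_R is expressed by the literal definition: they have a support in the
  ideal I (reals, naturals and ordered pairs of such are pure sets, hence
  hereditarily fixed).\<close>

type_synonym atom = "nat \<times> real"

definition A :: "nat \<Rightarrow> atom set" where
  "A n = {n} \<times> UNIV"

definition Gperm :: "(atom \<Rightarrow> atom) set" where
  "Gperm = {\<pi>. \<exists>f :: nat \<Rightarrow> real \<Rightarrow> real.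
      (\<forall>n. strict_mono (f n) \<and> surj (f n)) \<and> (\<forall>n x. \<pi> (n, x) = (n, f n x))}"

definition fixes_blocks :: "(atom \<Rightarrow> atom) \<Rightarrow> nat set \<Rightarrow> bool" where
  "fixes_blocks \<pi> S \<longleftrightarrow> (\<forall>n\<in>S. \<forall>a\<in>A n. \<pi> a = a)"

text \<open>t has a support in I, with respect to a given action of G.
  (Every E in I is contained in a finite union of blocks, and supports are
  upward closed, so it suffices to consider finite unions of blocks.)\<close>
definition symm :: "((atom \<Rightarrow> atom) \<Rightarrow> 'x \<Rightarrow> 'x) \<Rightarrow> 'x \<Rightarrow> bool" where
  "symm act t \<longleftrightarrow> (\<exists>S. finite S \<and> (\<forall>\<pi>\<in>Gperm. fixes_blocks \<pi> S \<longrightarrow> act \<pi> t = t))"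

text \<open>Actions (induced by the epsilon-automorphism extension).\<close>
definition act_set :: "(atom \<Rightarrow> atom) \<Rightarrow> atom set \<Rightarrow> atom set" where
  "act_set \<pi> U = \<pi> ` U"

definition act_setset :: "(atom \<Rightarrow> atom) \<Rightarrow> atom set set \<Rightarrow> atom set set" where
  "act_setset \<pi> T = act_set \<pi> ` T"

definition act_graph ::
  "(atom \<Rightarrow> atom) \<Rightarrow> ((atom \<times> atom) \<times> real) set \<Rightarrow> ((atom \<times> atom) \<times> real) set" where
  "act_graph \<pi> D = (\<lambda>((a, b), r). ((\<pi> a, \<pi> b), r)) ` D"

definition act_graphs ::
  "(atom \<Rightarrow> atom) \<Rightarrow> ((atom \<times> atom) \<times> real) set set \<Rightarrow> ((atom \<times> atom) \<times> real) set set" where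
  "act_graphs \<pi> F = act_graph \<pi> ` F"

definition act_spacefam ::
  "(atom \<Rightarrow> atom) \<Rightarrow> (nat \<Rightarrow> atom set \<times> atom set set) \<Rightarrow> (nat \<Rightarrow> atom set \<times> atom set set)" where
  "act_spacefam \<pi> F = (\<lambda>n. (act_set \<pi> (fst (F n)), act_setset \<pi> (snd (F n))))"

definition graph :: "atom set \<Rightarrow> (atom \<Rightarrow> atom \<Rightarrow> real) \<Rightarrow> ((atom \<times> atom) \<times> real) set" where
  "graph X d = {((a, b), d a b) | a b. a \<in> X \<and> b \<in> X}"

definition metric_on :: "atom set \<Rightarrow> (atom \<Rightarrow> atom \<Rightarrow> real) \<Rightarrow> bool" where
  "metric_on X d \<longleftrightarrow>
     (\<forall>a\<in>X. \<forall>b\<in>X. 0 \<le> d a b \<and> (d a b = 0 \<longleftrightarrow> a = b) \<and> d a b = d b a) \<and>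
     (\<forall>a\<in>X. \<forall>b\<in>X. \<forall>c\<in>X. d a c \<le> d a b + d b c)"

definition metric_open :: "atom set \<Rightarrow> (atom \<Rightarrow> atom \<Rightarrow> real) \<Rightarrow> atom set \<Rightarrow> bool" where
  "metric_open X d U \<longleftrightarrow> U \<subseteq> X \<and>
     (\<forall>a\<in>U. \<exists>e>0. \<forall>b\<in>X. d a b < e \<longrightarrow> b \<in> U)"

definition tau :: "nat \<Rightarrow> atom set set" where
  "tau n = {{n} \<times> V | V. generate_topology (range lessThan \<union> range greaterThan) (V :: real set)}"

text \<open>The topology tau_n as computed in N_R (its members lying in N_R).\<close>
definition tauN :: "nat \<Rightarrow> atom set set" where
  "tauN n = {U \<in> tau n. symm act_set U}"

definition sum_top :: "atom set set" where
  "sum_top = {U. \<forall>n. U \<inter> A n \<in> tau n}"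

text \<open>A space (X, T) (X, T in N_R) is metrizable in N_R: there is a metric d whose
  graph lies in N_R and whose metric topology, computed in N_R, equals T as
  computed in N_R.\<close>
definition metrizable_in_N :: "atom set \<Rightarrow> atom set set \<Rightarrow> bool" where
  "metrizable_in_N X T \<longleftrightarrow> (\<exists>d. metric_on X d \<and> symm act_graph (graph X d) \<and>
     (\<forall>U. symm act_set U \<longrightarrow> (U \<in> T \<longleftrightarrow> metric_open X d U)))"

definition dn :: "nat \<Rightarrow> atom \<Rightarrow> atom \<Rightarrow> real" where
  "dn n a b = \<bar>snd a - snd b\<bar>"

end

theory Submission
  imports Defs
begin

lemma tau_iff: "U \<in> tau n \<longleftrightarrow> (\<exists>V::real set. open V \<and> U = {n} \<times> V)"
  unfolding tau_def open_generated_order by auto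

lemma A_tau: "A n \<in> tau n"
  unfolding tau_iff A_def by auto

lemma tau_sub: "U \<in> tau n \<Longrightarrow> U \<subseteq> A n"
  unfolding tau_iff A_def by auto

lemma smono_img_less:
  fixes f :: "real \<Rightarrow> real"
  assumes "strict_mono f" "surj f"
  shows "f ` {..<a} = {..<f a}" "f ` {a<..} = {f a<..}"
proof -
  show "f ` {..<a} = {..<f a}"
  proof
    show "f ` {..<a} \<subseteq> {..<f a}" using assms(1) by (auto simp: strict_mono_less)
    show "{..<f a} \<subseteq> f ` {..<a}"
    proof
      fix y assume "y \<in> {..<f a}"
      obtain z where z: "y = f z" using assms(2) by (metis surjD)
      have "z < a" using \<open>y \<in> {..<f a}\<close> z assms(1) by (auto simp: strict_mono_less)
      then show "y \<in> f ` {..<a}" using z by auto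
    qed
  qed
  show "f ` {a<..} = {f a<..}"
  proof
    show "f ` {a<..} \<subseteq> {f a<..}" using assms(1) by (auto simp: strict_mono_less)
    show "{f a<..} \<subseteq> f ` {a<..}"
    proof
      fix y assume "y \<in> {f a<..}"
      obtain z where z: "y = f z" using assms(2) by (metis surjD)
      have "a < z" using \<open>y \<in> {f a<..}\<close> z assms(1) by (auto simp: strict_mono_less)
      then show "y \<in> f ` {a<..}" using z by auto
    qed
  qed
qed

lemma smono_open_img:
  fixes f :: "real \<Rightarrow> real"
  assumes "strict_mono f" "surj f" "open V"
  shows "open (f ` V)"
proof -
  have inj: "inj f" using assms(1) strict_mono_imp_inj_on by blast
  have "generate_topology (range lessThan \<union> range greaterThan) V"
    using assms(3) unfolding open_generated_order by simp
  then have "generate_topology (range lessThan \<union> range greaterThan) (f ` V)"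
  proof (induction rule: generate_topology.induct)
    case UNIV
    then show ?case using assms(2) by (simp add: generate_topology.UNIV)
  next
    case (Int a b)
    have "f ` (a \<inter> b) = f ` a \<inter> f ` b" using inj by (simp add: image_Int)
    then show ?case using Int by (simp add: generate_topology.Int)
  next
    case (UN K)
    have "f ` \<Union>K = \<Union>((`) f ` K)" by auto
    then show ?case using UN by (auto intro: generate_topology.UN)
  next
    case (Basis s)
    then show ?case using smono_img_less[OF assms(1,2)]
      by (auto intro: generate_topology.Basis)
  qed
  then show ?thesis unfolding open_generated_order by simp
qed

lemma inv_smono:
  fixes f :: "real \<Rightarrow> real"
  assumes "strict_mono f" "surj f"
  shows "strict_mono (inv f)" "surj (inv f)" "f ` (inv f ` V) = V"
proof -
  have inj: "inj f" using assms(1) strict_mono_imp_inj_on by blast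
  have fi: "\<And>x. f (inv f x) = x" using assms(2) by (simp add: surj_f_inv_f)
  show "strict_mono (inv f)"
    unfolding strict_mono_def
  proof (intro allI impI)
    fix x y :: real assume "x < y"
    show "inv f x < inv f y"
    proof (rule ccontr)
      assume "\<not> inv f x < inv f y"
      then have "f (inv f y) \<le> f (inv f x)" using assms(1)
        by (simp add: strict_mono_less_eq)
      then show False using fi \<open>x < y\<close> by simp
    qed
  qed
  show "surj (inv f)" using inj by (metis inv_f_f surjI)
  show "f ` (inv f ` V) = V" using fi by (simp add: image_image)
qed

lemma Gperm_img:
  assumes "\<pi> \<in> Gperm"
  obtains f where "\<And>n. strict_mono (f n)" "\<And>n. surj (f n)" "\<And>n x. \<pi> (n, x) = (n, f n x)"
  using assms unfolding Gperm_def by blast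

lemma img_block: "(\<And>n x. \<pi> (n, x) = (n, f n x)) \<Longrightarrow> \<pi> ` ({n} \<times> V) = {n} \<times> (f n ` V)"
proof -
  assume h: "\<And>n x. \<pi> (n, x) = (n, f n x)"
  have "\<pi> ` ({n} \<times> V) = (\<lambda>x. (n, f n x)) ` V" using h by (force simp: image_iff)
  then show ?thesis by auto
qed

lemma tauN_eq: "tauN n = tau n"
proof -
  have "symm act_set U" if "U \<in> tau n" for U
    unfolding symm_def
  proof (intro exI[of _ "{n}"] conjI ballI impI)
    fix \<pi> assume "fixes_blocks \<pi> {n}"
    then have "\<forall>a\<in>A n. \<pi> a = a" unfolding fixes_blocks_def by auto
    then have "\<pi> ` U = id ` U" using tau_sub[OF that] by (intro image_cong) auto
    then show "act_set \<pi> U = U" by (simp add: act_set_def)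
  qed simp
  then show ?thesis unfolding tauN_def by auto
qed

lemma tau_invariant:
  assumes "\<pi> \<in> Gperm"
  shows "act_setset \<pi> (tau n) = tau n"
proof -
  obtain f where f: "\<And>n. strict_mono (f n)" "\<And>n. surj (f n)" "\<And>n x. \<pi> (n, x) = (n, f n x)"
    using Gperm_img[OF assms] by blast
  show ?thesis
  proof
    show "act_setset \<pi> (tau n) \<subseteq> tau n"
    proof
      fix W assume "W \<in> act_setset \<pi> (tau n)"
      then obtain U where U: "U \<in> tau n" "W = \<pi> ` U" unfolding act_setset_def act_set_def by auto
      then obtain V where V: "open V" "U = {n} \<times> V" unfolding tau_iff by auto
      have "W = {n} \<times> (f n ` V)" using U V img_block[of \<pi> f, OF f(3)] by simp
      then show "W \<in> tau n" unfolding tau_iff using smono_open_img[OF f(1,2) V(1)] by blast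
    qed
    show "tau n \<subseteq> act_setset \<pi> (tau n)"
    proof
      fix W assume "W \<in> tau n"
      then obtain V where V: "open V" "W = {n} \<times> V" unfolding tau_iff by auto
      let ?U = "{n} \<times> (inv (f n) ` V)"
      have "?U \<in> tau n" unfolding tau_iff
        using smono_open_img[OF inv_smono(1,2)[OF f(1,2)] V(1)] by blast
      moreover have "\<pi> ` ?U = W" using img_block[of \<pi> f, OF f(3)] V(2) inv_smono(3)[OF f(1,2)] by simp
      ultimately show "W \<in> act_setset \<pi> (tau n)" unfolding act_setset_def act_set_def by auto
    qed
  qed
qed

lemma A_invariant:
  assumes "\<pi> \<in> Gperm"
  shows "act_set \<pi> (A n) = A n"
proof -
  obtain f where f: "\<And>n. strict_mono (f n)" "\<And>n. surj (f n)" "\<And>n x. \<pi> (n, x) = (n, f n x)"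
    using Gperm_img[OF assms] by blast
  show ?thesis unfolding act_set_def A_def using img_block[of \<pi> f, OF f(3), of n UNIV] f(2)
    by simp
qed

lemma graph_symm: "symm act_graph (graph (A n) d)"
  unfolding symm_def
proof (intro exI[of _ "{n}"] conjI ballI impI)
  fix \<pi> assume "fixes_blocks \<pi> {n}"
  then have fx: "\<forall>a\<in>A n. \<pi> a = a" unfolding fixes_blocks_def by auto
  show "act_graph \<pi> (graph (A n) d) = graph (A n) d"
    unfolding act_graph_def graph_def
  proof (rule set_eqI, rule iffI)
    fix z assume "z \<in> (\<lambda>((a, b), r). ((\<pi> a, \<pi> b), r)) ` {((a, b), d a b) |a b. a \<in> A n \<and> b \<in> A n}"
    then show "z \<in> {((a, b), d a b) |a b. a \<in> A n \<and> b \<in> A n}" using fx by auto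
  next
    fix z assume z: "z \<in> {((a, b), d a b) |a b. a \<in> A n \<and> b \<in> A n}"
    then obtain a b where ab: "z = ((a, b), d a b)" "a \<in> A n" "b \<in> A n" by auto
    then have "z = (\<lambda>((a, b), r). ((\<pi> a, \<pi> b), r)) ((a, b), d a b)" using fx by auto
    then show "z \<in> (\<lambda>((a, b), r). ((\<pi> a, \<pi> b), r)) ` {((a, b), d a b) |a b. a \<in> A n \<and> b \<in> A n}"
      using ab by blast
  qed
qed simp

lemma dn_metric: "metric_on (A n) (dn n)"
  unfolding metric_on_def dn_def A_def by auto

lemma dn_open: "U \<in> tau n \<longleftrightarrow> metric_open (A n) (dn n) U"
proof
  assume "U \<in> tau n"
  then obtain V where V: "open V" "U = {n} \<times> V" unfolding tau_iff by auto
  show "metric_open (A n) (dn n) U" unfolding metric_open_def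
  proof (intro conjI ballI)
    show "U \<subseteq> A n" using V unfolding A_def by auto
    fix a assume "a \<in> U"
    then obtain x where x: "a = (n, x)" "x \<in> V" using V by auto
    obtain e where e: "e > 0" "\<And>y. dist y x < e \<Longrightarrow> y \<in> V" using V(1) x(2) open_dist by blast
    show "\<exists>e>0. \<forall>b\<in>A n. dn n a b < e \<longrightarrow> b \<in> U"
      using e x V unfolding dn_def A_def dist_real_def by (auto simp: abs_minus_commute)
  qed
next
  assume m: "metric_open (A n) (dn n) U"
  let ?V = "{x. (n, x) \<in> U}"
  have U: "U = {n} \<times> ?V" using m unfolding metric_open_def A_def by auto
  have "open ?V" unfolding open_dist
  proof (intro ballI)
    fix x assume "x \<in> ?V"
    then obtain e where "e > 0" "\<forall>b\<in>A n. dn n (n, x) b < e \<longrightarrow> b \<in> U"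
      using m unfolding metric_open_def by auto
    then show "\<exists>e>0. \<forall>y. dist y x < e \<longrightarrow> y \<in> ?V"
      unfolding dn_def A_def dist_real_def by (auto simp: abs_minus_commute)
  qed
  then show "U \<in> tau n" unfolding tau_iff using U by blast
qed

lemma metrizable_An: "metrizable_in_N (A n) (tau n)"
  unfolding metrizable_in_N_def using dn_metric graph_symm dn_open by blast

lemma spacefam_symm: "symm act_spacefam (\<lambda>n. (A n, tauN n))"
  unfolding symm_def act_spacefam_def tauN_eq
  using A_invariant tau_invariant by (intro exI[of _ "{}"]) auto

lemma inj_fam: "inj (\<lambda>n. (A n, tauN n))"
  unfolding inj_def A_def by auto

definition shiftf :: "nat \<Rightarrow> real \<Rightarrow> real \<Rightarrow> nat \<Rightarrow> real \<Rightarrow> real" where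
  "shiftf m x c k t = (if k = m then x + c * t else t)"

lemma shift_in_G:
  assumes "c > 0"
  shows "(\<lambda>(k, t). (k, shiftf m x c k t)) \<in> Gperm"
  unfolding Gperm_def
proof (intro CollectI exI[of _ "shiftf m x c"] conjI allI)
  fix n
  show "strict_mono (shiftf m x c n)" unfolding strict_mono_def shiftf_def using assms by auto
  show "surj (shiftf m x c n)"
  proof (cases "n = m")
    case True
    show ?thesis
    proof (rule surjI)
      fix y show "shiftf m x c n ((y - x) / c) = y" using True assms unfolding shiftf_def by simp
    qed
  next
    case False then show ?thesis unfolding shiftf_def by simp
  qed
qed simp

lemma shift_fixes: "m \<notin> S \<Longrightarrow> fixes_blocks (\<lambda>(k, t). (k, shiftf m x c k t)) S"
  unfolding fixes_blocks_def A_def shiftf_def by auto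

lemma not_metrizable: "\<not> metrizable_in_N UNIV sum_top"
proof
  assume "metrizable_in_N UNIV sum_top"
  then obtain d where met: "metric_on UNIV d" and sy: "symm act_graph (graph UNIV d)"
    and eq: "\<And>U. symm act_set U \<Longrightarrow> (U \<in> sum_top \<longleftrightarrow> metric_open UNIV d U)"
    unfolding metrizable_in_N_def by blast
  obtain S where S: "finite S" "\<And>\<pi>. \<pi> \<in> Gperm \<Longrightarrow> fixes_blocks \<pi> S \<Longrightarrow> act_graph \<pi> (graph UNIV d) = graph UNIV d"
    using sy unfolding symm_def by blast
  obtain m where m: "m \<notin> S" using S(1) by (meson ex_new_if_finite infinite_UNIV_nat)
  have iso: "d (\<pi> a) (\<pi> b) = d a b" if "\<pi> \<in> Gperm" "fixes_blocks \<pi> S" for \<pi> a b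
  proof -
    have "((\<pi> a, \<pi> b), d a b) \<in> act_graph \<pi> (graph UNIV d)"
      unfolding act_graph_def graph_def
      by (rule image_eqI[of _ _ "((a, b), d a b)"]) (simp, blast)
    then have "((\<pi> a, \<pi> b), d a b) \<in> graph UNIV d" using S(2) that by simp
    then show ?thesis unfolding graph_def by auto
  qed
  define c where "c = d (m, 0) (m, 1)"
  have cpos: "c > 0" using met unfolding c_def metric_on_def
    by (metis Pair_inject UNIV_I less_eq_real_def zero_neq_one)
  have dc: "d (m, x) (m, y) = c" if "x < y" for x y
  proof -
    let ?\<pi> = "\<lambda>(k, t). (k, shiftf m x (y - x) k t)"
    have "d (?\<pi> (m, 0)) (?\<pi> (m, 1)) = c" unfolding c_def
      by (rule iso[OF shift_in_G shift_fixes[OF m]]) (use that in simp)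
    then show ?thesis unfolding shiftf_def by simp
  qed
  have dc2: "d (m, 0) b \<ge> c" if hb: "b \<in> A m" "b \<noteq> (m, 0)" for b
  proof -
    obtain y where y: "b = (m, y)" "y \<noteq> 0" using hb unfolding A_def by (cases b) auto
    show ?thesis
    proof (cases "0 < y")
      case True then show ?thesis using dc y by simp
    next
      case False
      then have "y < 0" using y by simp
      then have "d (m, y) (m, 0) = c" using dc by simp
      then show ?thesis using met y unfolding metric_on_def by (metis UNIV_I order_refl)
    qed
  qed
  have symA: "symm act_set (A m)" unfolding symm_def using A_invariant by blast
  have "A m \<in> sum_top" unfolding sum_top_def
  proof (intro CollectI allI)
    fix k show "A m \<inter> A k \<in> tau k"
    proof (cases "k = m")
      case True then show ?thesis using A_tau by simp
    next
      case False
      then have "A m \<inter> A k = {k} \<times> {}" unfolding A_def by auto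
      then show ?thesis unfolding tau_iff by blast
    qed
  qed
  then have "metric_open UNIV d (A m)" using eq[OF symA] by simp
  then have "\<exists>e>0. \<forall>b\<in>UNIV. d (m, 0) b < e \<longrightarrow> b \<in> A m"
    unfolding metric_open_def A_def by auto
  then obtain e where e: "e > 0" "\<And>b. d (m, 0) b < e \<Longrightarrow> b \<in> A m"
    by blast
  have symS: "symm act_set {(m, 0::real)}" unfolding symm_def
  proof (intro exI[of _ "{m}"] conjI ballI impI)
    fix \<pi> assume "fixes_blocks \<pi> {m}"
    then show "act_set \<pi> {(m, 0)} = {(m, 0)}" unfolding fixes_blocks_def A_def act_set_def by auto
  qed simp
  have "metric_open UNIV d {(m, 0)}" unfolding metric_open_def
  proof (intro conjI ballI)
    fix a assume "a \<in> {(m, 0::real)}"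
    then have a: "a = (m, 0)" by simp
    show "\<exists>e>0. \<forall>b\<in>UNIV. d a b < e \<longrightarrow> b \<in> {(m, 0)}"
    proof (intro exI[of _ "min e c"] conjI ballI impI)
      show "min e c > 0" using e cpos by simp
      fix b assume "d a b < min e c"
      then have "b \<in> A m" "d (m, 0) b < c" using e a by auto
      then show "b \<in> {(m, 0)}" using dc2 by fastforce
    qed
  qed simp
  then have "{(m, 0)} \<in> sum_top" using eq[OF symS] by simp
  then have "{(m, 0::real)} \<inter> A m \<in> tau m" unfolding sum_top_def by blast
  moreover have "{(m, 0::real)} \<inter> A m = {m} \<times> {0}" unfolding A_def by auto
  ultimately obtain V :: "real set" where V: "open V" "{m} \<times> {0} = {m} \<times> V" unfolding tau_iff by metis
  then have "V = {0}" by blast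
  then have "open {0::real}" using V by simp
  then show False by (metis not_open_singleton)
qed

lemma not_symm_graphs: "\<not> symm act_graphs {graph (A n) (dn n) | n. True}"
proof
  assume "symm act_graphs {graph (A n) (dn n) | n. True}"
  then obtain S where S: "finite S" "\<And>\<pi>. \<pi> \<in> Gperm \<Longrightarrow> fixes_blocks \<pi> S \<Longrightarrow>
      act_graphs \<pi> {graph (A n) (dn n) | n. True} = {graph (A n) (dn n) | n. True}"
    unfolding symm_def by blast
  obtain m where m: "m \<notin> S" using S(1) by (meson ex_new_if_finite infinite_UNIV_nat)
  let ?\<pi> = "\<lambda>(k, t). (k, shiftf m 0 2 k t)"
  have "act_graph ?\<pi> (graph (A m) (dn m)) \<in> act_graphs ?\<pi> {graph (A n) (dn n) | n. True}"
    unfolding act_graphs_def by blast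
  then have "act_graph ?\<pi> (graph (A m) (dn m)) \<in> {graph (A n) (dn n) | n. True}"
    using S(2)[OF shift_in_G shift_fixes[OF m]] by simp
  then obtain k where k: "act_graph ?\<pi> (graph (A m) (dn m)) = graph (A k) (dn k)" by blast
  have "(((m, 0), (m, 1)), dn m (m, 0) (m, 1)) \<in> graph (A m) (dn m)"
    unfolding graph_def A_def by blast
  then have "((?\<pi> (m, 0), ?\<pi> (m, 1)), dn m (m, 0) (m, 1)) \<in> act_graph ?\<pi> (graph (A m) (dn m))"
    unfolding act_graph_def by force
  then have "(((m, 0), (m, 2)), 1) \<in> graph (A k) (dn k)"
    using k unfolding shiftf_def dn_def by simp
  then show False unfolding graph_def dn_def by auto
qed

theorem proposition3p10:
  shows "(\<forall>n. metrizable_in_N (A n) (tau n))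
    \<and> (\<forall>n. metric_on (A n) (dn n) \<and> symm act_graph (graph (A n) (dn n)))
    \<and> inj (\<lambda>n. (A n, tauN n)) \<and> symm act_spacefam (\<lambda>n. (A n, tauN n))
    \<and> \<not> metrizable_in_N UNIV sum_top
    \<and> \<not> symm act_graphs {graph (A n) (dn n) | n. True}"
  using metrizable_An dn_metric graph_symm inj_fam spacefam_symm not_metrizable not_symm_graphs
  by blast

end
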